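(* Let $(\mathfrak{A},\mathfrak{A}_0)$ be a CQ*-algebra as in the context, let $H=H^*\in\mathfrak{A}$ and $\omega\in E(\mathfrak{A}_0)$, and suppose $\overline{\omega}$ is a ground state for $H$ with eigenvalue $\alpha_*$. Then: (1) $-i\,\overline{\omega}(A^*\delta_H(A))\ge0$ for all $A\in\mathfrak{A}_0$; (2) $\overline{\omega}(\delta_H(A))=0$ for all $A\in\mathfrak{A}_0$; (3) $\alpha_*=\min Spec(\pi_{\overline{\omega}}(H))$.
   Context: Let $\mathfrak{A}_0$ be a unital C*-algebra with C*-norm $\|\cdot\|_0$ and unit $I$, and $\|\cdot\|$ another norm on $\mathfrak{A}_0$ with $\|A\|\le\|A\|_0$, $\|AB\|\le\|A\|\,\|B\|_0$, $\|A^*\|=\|A\|$. $\mathfrak{A}$ is the $\|\cdot\|$-completion of $\mathfrak{A}_0$, with $XA:=\lim A_nA$, $AX:=\lim AA_n$, $X^*:=\lim A_n^*$ for $X\in\mathfrak{A}$, $A\in\mathfrak{A}_0$, $A_n\in\mathfrak{A}_0$, $\|A_n-X\|\to0$. $E(\mathfrak{A}_0)$ is the set of positive linear functionals $\omega$ on $\mathfrak{A}_0$ with $\omega(I)=1$ and $|\omega(A)|\le\gamma\|A\|$ for some $\gamma>0$; $\overline{\omega}$ is its continuous extension to $\mathfrak{A}$. $(\pi_\omega,\lambda_\omega,\mathcal{H}_\omega)$ is the GNS construction of $\omega$ on $\mathfrak{A}_0$ ($\lambda_\omega:\mathfrak{A}_0\to\mathcal{H}_\omega$ linear with dense range, $(\lambda_\omega(A)|\lambda_\omega(B))=\omega(B^*A)$).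 For $X\in\mathfrak{A}$ and $B\in\mathfrak{A}_0$, $\pi_{\overline{\omega}}(X)\lambda_\omega(B)$ is the conjugate-linear functional on $\lambda_\omega(\mathfrak{A}_0)$ given by $\langle\pi_{\overline{\omega}}(X)\lambda_\omega(B),\lambda_\omega(C)\rangle=\overline{\omega}(C^*XB)$, $C\in\mathfrak{A}_0$. Such a functional $v$ is bounded if it extends continuously to $\mathcal{H}_\omega$, and then $[v]\in\mathcal{H}_\omega$ is the vector with $\langle v,\eta\rangle=([v]|\eta)$. For $A\in\mathfrak{A}_0$, $\delta_H(A):=i(HA-AH)\in\mathfrak{A}$. $\overline{\omega}$ is a ground state for $H$ (with eigenvalue $\alpha_*$) if (a) $\overline{\omega}(AH)=\alpha_*\overline{\omega}(A)$ for all $A\in\mathfrak{A}_0$, and (b) $\langle\pi_{\overline{\omega}}(H)\lambda_\omega(B),\lambda_\omega(B)\rangle\ge\alpha_*(\lambda_\omega(B)|\lambda_\omega(B))$ for all $B\in\mathfrak{A}_0$. $Spec(\pi_{\overline{\omega}}(H))$ is the set of $\alpha\in\mathbb{C}$ for which there is $B\in\mathfrak{A}_0$ with $\lambda_\omega(B)\ne0$, $\pi_{\overline{\omega}}(H)\lambda_\omega(B)$ bounded and $[\pi_{\overline{\omega}}(H)\lambda_\omega(B)]=\alpha\lambda_\omega(B)$. *)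

theory Defs
  imports "HOL-Analysis.Analysis" "HOL-Library.Complex_Order"
begin

text \<open>The ambient type 'a models the completion \<A> (a Banach space with norm \<parallel>.\<parallel>).
  Complex structure: iu is multiplication by the imaginary unit, and cscale c x is c x.
  A0 is the subset \<A>_0, mul the (partial) multiplication, star the involution,
  norm0 the C*-norm on \<A>_0, I the unit.\<close>

definition cscale :: "('a::real_vector \<Rightarrow> 'a) \<Rightarrow> complex \<Rightarrow> 'a \<Rightarrow> 'a" where
  "cscale iu c x = Re c *\<^sub>R x + Im c *\<^sub>R iu x"

definition CQ_star_algebra ::
  "'a::banach set \<Rightarrow> ('a \<Rightarrow> real) \<Rightarrow> ('a \<Rightarrow> 'a) \<Rightarrow> ('a \<Rightarrow> 'a \<Rightarrow> 'a) \<Rightarrow> ('a \<Rightarrow> 'a) \<Rightarrow> 'a \<Rightarrow> bool"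
where
  "CQ_star_algebra A0 norm0 iu mul star I \<longleftrightarrow>
     \<comment> \<open>complex normed space structure on \<A>\<close>
     linear iu \<and> (\<forall>x. iu (iu x) = - x) \<and>
     (\<forall>c x. norm (cscale iu c x) = cmod c * norm x) \<and>
     \<comment> \<open>\<A>_0 is a complex subspace, dense in \<A>\<close>
     0 \<in> A0 \<and> (\<forall>A\<in>A0. \<forall>B\<in>A0. A + B \<in> A0) \<and> (\<forall>c. \<forall>A\<in>A0. cscale iu c A \<in> A0) \<and>
     closure A0 = UNIV \<and>
     \<comment> \<open>\<A>_0 is a unital *-algebra\<close>
     I \<in> A0 \<and>
     (\<forall>A\<in>A0. \<forall>B\<in>A0. mul A B \<in> A0) \<and> (\<forall>A\<in>A0. star A \<in> A0) \<and>
     (\<forall>A\<in>A0. \<forall>B\<in>A0. \<forall>C\<in>A0. mul (mul A B) C = mul A (mul B C)) \<and>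
     (\<forall>A\<in>A0. \<forall>B\<in>A0. \<forall>C\<in>A0. mul (A + B) C = mul A C + mul B C \<and> mul C (A + B) = mul C A + mul C B) \<and>
     (\<forall>c. \<forall>A\<in>A0. \<forall>B\<in>A0. mul (cscale iu c A) B = cscale iu c (mul A B) \<and> mul A (cscale iu c B) = cscale iu c (mul A B)) \<and>
     (\<forall>A\<in>A0. mul I A = A \<and> mul A I = A) \<and>
     (\<forall>A\<in>A0. \<forall>B\<in>A0. star (A + B) = star A + star B) \<and>
     (\<forall>c. \<forall>A\<in>A0. star (cscale iu c A) = cscale iu (cnj c) (star A)) \<and>
     (\<forall>A\<in>A0. star (star A) = A) \<and>
     (\<forall>A\<in>A0. \<forall>B\<in>A0. star (mul A B) = mul (star B) (star A)) \<and>
     \<comment> \<open>norm0 is a C*-norm on \<A>_0 and \<A>_0 is complete for it\<close>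
     (\<forall>A\<in>A0. 0 \<le> norm0 A \<and> (norm0 A = 0 \<longleftrightarrow> A = 0)) \<and>
     (\<forall>A\<in>A0. \<forall>B\<in>A0. norm0 (A + B) \<le> norm0 A + norm0 B) \<and>
     (\<forall>c. \<forall>A\<in>A0. norm0 (cscale iu c A) = cmod c * norm0 A) \<and>
     (\<forall>A\<in>A0. \<forall>B\<in>A0. norm0 (mul A B) \<le> norm0 A * norm0 B) \<and>
     (\<forall>A\<in>A0. norm0 (mul (star A) A) = (norm0 A)\<^sup>2) \<and>
     (\<forall>An. (\<forall>n. An n \<in> A0) \<and> (\<forall>e>0. \<exists>N. \<forall>m\<ge>N. \<forall>n\<ge>N. norm0 (An m - An n) < e)
        \<longrightarrow> (\<exists>L\<in>A0. (\<lambda>n. norm0 (An n - L)) \<longlonglongrightarrow> 0)) \<and>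
     \<comment> \<open>compatibility of \<parallel>.\<parallel> with \<parallel>.\<parallel>_0\<close>
     (\<forall>A\<in>A0. norm A \<le> norm0 A) \<and>
     (\<forall>A\<in>A0. \<forall>B\<in>A0. norm (mul A B) \<le> norm A * norm0 B) \<and>
     (\<forall>A\<in>A0. norm (star A) = norm A) \<and>
     \<comment> \<open>the extended operations on the completion \<A>: XA, AX, X*\<close>
     (\<forall>X. \<forall>A\<in>A0. \<forall>An. (\<forall>n. An n \<in> A0) \<and> An \<longlonglongrightarrow> X \<longrightarrow>
        (\<lambda>n. mul (An n) A) \<longlonglongrightarrow> mul X A \<and>
        (\<lambda>n. mul A (An n)) \<longlonglongrightarrow> mul A X \<and>
        (\<lambda>n. star (An n)) \<longlonglongrightarrow> star X)"

definition E_states ::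
  "'a::banach set \<Rightarrow> ('a \<Rightarrow> 'a) \<Rightarrow> ('a \<Rightarrow> 'a \<Rightarrow> 'a) \<Rightarrow> ('a \<Rightarrow> 'a) \<Rightarrow> 'a \<Rightarrow> ('a \<Rightarrow> complex) set"
where
  "E_states A0 iu mul star I = {\<omega>.
     (\<forall>A\<in>A0. \<forall>B\<in>A0. \<omega> (A + B) = \<omega> A + \<omega> B) \<and>
     (\<forall>c. \<forall>A\<in>A0. \<omega> (cscale iu c A) = c * \<omega> A) \<and>
     (\<forall>A\<in>A0. 0 \<le> \<omega> (mul (star A) A)) \<and>
     \<omega> I = 1 \<and>
     (\<exists>\<gamma>>0. \<forall>A\<in>A0. cmod (\<omega> A) \<le> \<gamma> * norm A)}"

definition omega_bar :: "'a::banach set \<Rightarrow> ('a \<Rightarrow> complex) \<Rightarrow> 'a \<Rightarrow> complex" where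
  "omega_bar A0 \<omega> X = (THE z. \<forall>An. (\<forall>n. An n \<in> A0) \<and> An \<longlonglongrightarrow> X \<longrightarrow> (\<lambda>n. \<omega> (An n)) \<longlonglongrightarrow> z)"

text \<open>GNS inner product (\<lambda>_\<omega>(A) | \<lambda>_\<omega>(B)) = \<omega>(B* A).\<close>
definition gns_ip :: "('a \<Rightarrow> complex) \<Rightarrow> ('a \<Rightarrow> 'a \<Rightarrow> 'a) \<Rightarrow> ('a \<Rightarrow> 'a) \<Rightarrow> 'a \<Rightarrow> 'a \<Rightarrow> complex" where
  "gns_ip \<omega> mul star A B = \<omega> (mul (star B) A)"

text \<open>\<langle>\<pi>_\<omega>bar(X) \<lambda>_\<omega>(B), \<lambda>_\<omega>(C)\<rangle> = \<omega>bar(C* X B).\<close>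
definition pi_form ::
  "'a::banach set \<Rightarrow> ('a \<Rightarrow> complex) \<Rightarrow> ('a \<Rightarrow> 'a \<Rightarrow> 'a) \<Rightarrow> ('a \<Rightarrow> 'a) \<Rightarrow> 'a \<Rightarrow> 'a \<Rightarrow> 'a \<Rightarrow> complex" where
  "pi_form A0 \<omega> mul star X B C = omega_bar A0 \<omega> (mul (star C) (mul X B))"

text \<open>\<pi>_\<omega>bar(X)\<lambda>_\<omega>(B) is bounded: the conjugate-linear functional on the dense subspace
  \<lambda>_\<omega>(\<A>_0) is bounded w.r.t. the GNS norm \<parallel>\<lambda>_\<omega>(C)\<parallel> = sqrt(\<omega>(C*C)),
  i.e. extends continuously to H_\<omega>.\<close>
definition pi_bounded ::
  "'a::banach set \<Rightarrow> ('a \<Rightarrow> complex) \<Rightarrow> ('a \<Rightarrow> 'a \<Rightarrow> 'a) \<Rightarrow> ('a \<Rightarrow> 'a) \<Rightarrow> 'a \<Rightarrow> 'a \<Rightarrow> bool" where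
  "pi_bounded A0 \<omega> mul star X B \<longleftrightarrow>
     (\<exists>K. \<forall>C\<in>A0. cmod (pi_form A0 \<omega> mul star X B C) \<le> K * sqrt (Re (gns_ip \<omega> mul star C C)))"

text \<open>Spec(\<pi>_\<omega>bar(X)). [\<pi>(X)\<lambda>(B)] = \<alpha> \<lambda>(B) is expressed by testing against the dense set
  \<lambda>_\<omega>(\<A>_0): \<langle>\<pi>(X)\<lambda>(B), \<lambda>(C)\<rangle> = (\<alpha>\<lambda>(B) | \<lambda>(C)) for all C.\<close>
definition Spec_pi ::
  "'a::banach set \<Rightarrow> ('a \<Rightarrow> complex) \<Rightarrow> ('a \<Rightarrow> 'a \<Rightarrow> 'a) \<Rightarrow> ('a \<Rightarrow> 'a) \<Rightarrow> 'a \<Rightarrow> complex set" where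
  "Spec_pi A0 \<omega> mul star X = {\<alpha>. \<exists>B\<in>A0.
     gns_ip \<omega> mul star B B \<noteq> 0 \<and> pi_bounded A0 \<omega> mul star X B \<and>
     (\<forall>C\<in>A0. pi_form A0 \<omega> mul star X B C = \<alpha> * gns_ip \<omega> mul star B C)}"

definition ground_state ::
  "'a::banach set \<Rightarrow> ('a \<Rightarrow> complex) \<Rightarrow> ('a \<Rightarrow> 'a \<Rightarrow> 'a) \<Rightarrow> ('a \<Rightarrow> 'a) \<Rightarrow> 'a \<Rightarrow> complex \<Rightarrow> bool" where
  "ground_state A0 \<omega> mul star H \<alpha> \<longleftrightarrow>
     (\<forall>A\<in>A0. omega_bar A0 \<omega> (mul A H) = \<alpha> * omega_bar A0 \<omega> A) \<and>
     (\<forall>B\<in>A0. pi_form A0 \<omega> mul star H B B \<ge> \<alpha> * gns_ip \<omega> mul star B B)"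

definition delta_H :: "('a::real_vector \<Rightarrow> 'a) \<Rightarrow> ('a \<Rightarrow> 'a \<Rightarrow> 'a) \<Rightarrow> 'a \<Rightarrow> 'a \<Rightarrow> 'a" where
  "delta_H iu mul H A = iu (mul H A - mul A H)"

end

theory Submission
  imports Defs
begin

locale cqa =
  fixes A0 :: "'a::banach set" and norm0 :: "'a \<Rightarrow> real" and iu :: "'a \<Rightarrow> 'a"
    and mul :: "'a \<Rightarrow> 'a \<Rightarrow> 'a" and star :: "'a \<Rightarrow> 'a" and I :: 'a
    and \<omega> :: "'a \<Rightarrow> complex"
  assumes cq: "CQ_star_algebra A0 norm0 iu mul star I"
    and om: "\<omega> \<in> E_states A0 iu mul star I"
begin

lemma lin: "linear iu" using cq[unfolded CQ_star_algebra_def, THEN conjunct1] by blast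
lemma ncs: "norm (cscale iu c x) = cmod c * norm x" using cq[unfolded CQ_star_algebra_def, THEN conjunct2, THEN conjunct2, THEN conjunct1] by blast
lemma addA: "A \<in> A0 \<Longrightarrow> B \<in> A0 \<Longrightarrow> A + B \<in> A0" using cq[unfolded CQ_star_algebra_def, THEN conjunct2, THEN conjunct2, THEN conjunct2, THEN conjunct2, THEN conjunct1] by blast
lemma scaleA: "A \<in> A0 \<Longrightarrow> cscale iu c A \<in> A0" using cq[unfolded CQ_star_algebra_def, THEN conjunct2, THEN conjunct2, THEN conjunct2, THEN conjunct2, THEN conjunct2, THEN conjunct1] by blast
lemma dense: "closure A0 = UNIV" using cq[unfolded CQ_star_algebra_def, THEN conjunct2, THEN conjunct2, THEN conjunct2, THEN conjunct2, THEN conjunct2, THEN conjunct2, THEN conjunct1] by blast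
lemma IA: "I \<in> A0" using cq[unfolded CQ_star_algebra_def, THEN conjunct2, THEN conjunct2, THEN conjunct2, THEN conjunct2, THEN conjunct2, THEN conjunct2, THEN conjunct2, THEN conjunct1] by blast
lemma mulA: "A \<in> A0 \<Longrightarrow> B \<in> A0 \<Longrightarrow> mul A B \<in> A0" using cq[unfolded CQ_star_algebra_def, THEN conjunct2, THEN conjunct2, THEN conjunct2, THEN conjunct2, THEN conjunct2, THEN conjunct2, THEN conjunct2, THEN conjunct2, THEN conjunct1] by blast
lemma starA: "A \<in> A0 \<Longrightarrow> star A \<in> A0" using cq[unfolded CQ_star_algebra_def, THEN conjunct2, THEN conjunct2, THEN conjunct2, THEN conjunct2, THEN conjunct2, THEN conjunct2, THEN conjunct2, THEN conjunct2, THEN conjunct2, THEN conjunct1] by blast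
lemma assoc: "A \<in> A0 \<Longrightarrow> B \<in> A0 \<Longrightarrow> C \<in> A0 \<Longrightarrow> mul (mul A B) C = mul A (mul B C)"
  using cq[unfolded CQ_star_algebra_def, THEN conjunct2, THEN conjunct2, THEN conjunct2, THEN conjunct2, THEN conjunct2, THEN conjunct2, THEN conjunct2, THEN conjunct2, THEN conjunct2, THEN conjunct2, THEN conjunct1] by blast
lemma distl: "A \<in> A0 \<Longrightarrow> B \<in> A0 \<Longrightarrow> C \<in> A0 \<Longrightarrow> mul (A + B) C = mul A C + mul B C"
  using cq[unfolded CQ_star_algebra_def, THEN conjunct2, THEN conjunct2, THEN conjunct2, THEN conjunct2, THEN conjunct2, THEN conjunct2, THEN conjunct2, THEN conjunct2, THEN conjunct2, THEN conjunct2, THEN conjunct2, THEN conjunct1] by blast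
lemma distr: "A \<in> A0 \<Longrightarrow> B \<in> A0 \<Longrightarrow> C \<in> A0 \<Longrightarrow> mul C (A + B) = mul C A + mul C B"
  using cq[unfolded CQ_star_algebra_def, THEN conjunct2, THEN conjunct2, THEN conjunct2, THEN conjunct2, THEN conjunct2, THEN conjunct2, THEN conjunct2, THEN conjunct2, THEN conjunct2, THEN conjunct2, THEN conjunct2, THEN conjunct1] by blast
lemma mscl: "A \<in> A0 \<Longrightarrow> B \<in> A0 \<Longrightarrow> mul (cscale iu c A) B = cscale iu c (mul A B)"
  using cq[unfolded CQ_star_algebra_def, THEN conjunct2, THEN conjunct2, THEN conjunct2, THEN conjunct2, THEN conjunct2, THEN conjunct2, THEN conjunct2, THEN conjunct2, THEN conjunct2, THEN conjunct2, THEN conjunct2, THEN conjunct2, THEN conjunct1] by blast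
lemma mscr: "A \<in> A0 \<Longrightarrow> B \<in> A0 \<Longrightarrow> mul A (cscale iu c B) = cscale iu c (mul A B)"
  using cq[unfolded CQ_star_algebra_def, THEN conjunct2, THEN conjunct2, THEN conjunct2, THEN conjunct2, THEN conjunct2, THEN conjunct2, THEN conjunct2, THEN conjunct2, THEN conjunct2, THEN conjunct2, THEN conjunct2, THEN conjunct2, THEN conjunct1] by blast
lemma unitl: "A \<in> A0 \<Longrightarrow> mul I A = A" using cq[unfolded CQ_star_algebra_def, THEN conjunct2, THEN conjunct2, THEN conjunct2, THEN conjunct2, THEN conjunct2, THEN conjunct2, THEN conjunct2, THEN conjunct2, THEN conjunct2, THEN conjunct2, THEN conjunct2, THEN conjunct2, THEN conjunct2, THEN conjunct1] by blast
lemma unitr: "A \<in> A0 \<Longrightarrow> mul A I = A" using cq[unfolded CQ_star_algebra_def, THEN conjunct2, THEN conjunct2, THEN conjunct2, THEN conjunct2, THEN conjunct2, THEN conjunct2, THEN conjunct2, THEN conjunct2, THEN conjunct2, THEN conjunct2, THEN conjunct2, THEN conjunct2, THEN conjunct2, THEN conjunct1] by blast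
lemma staradd: "A \<in> A0 \<Longrightarrow> B \<in> A0 \<Longrightarrow> star (A + B) = star A + star B"
  using cq[unfolded CQ_star_algebra_def, THEN conjunct2, THEN conjunct2, THEN conjunct2, THEN conjunct2, THEN conjunct2, THEN conjunct2, THEN conjunct2, THEN conjunct2, THEN conjunct2, THEN conjunct2, THEN conjunct2, THEN conjunct2, THEN conjunct2, THEN conjunct2, THEN conjunct1] by blast
lemma starscl: "A \<in> A0 \<Longrightarrow> star (cscale iu c A) = cscale iu (cnj c) (star A)"
  using cq[unfolded CQ_star_algebra_def, THEN conjunct2, THEN conjunct2, THEN conjunct2, THEN conjunct2, THEN conjunct2, THEN conjunct2, THEN conjunct2, THEN conjunct2, THEN conjunct2, THEN conjunct2, THEN conjunct2, THEN conjunct2, THEN conjunct2, THEN conjunct2, THEN conjunct2, THEN conjunct1] by blast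
lemma starstar: "A \<in> A0 \<Longrightarrow> star (star A) = A" using cq[unfolded CQ_star_algebra_def, THEN conjunct2, THEN conjunct2, THEN conjunct2, THEN conjunct2, THEN conjunct2, THEN conjunct2, THEN conjunct2, THEN conjunct2, THEN conjunct2, THEN conjunct2, THEN conjunct2, THEN conjunct2, THEN conjunct2, THEN conjunct2, THEN conjunct2, THEN conjunct2, THEN conjunct1] by blast
lemma starmul: "A \<in> A0 \<Longrightarrow> B \<in> A0 \<Longrightarrow> star (mul A B) = mul (star B) (star A)"
  using cq[unfolded CQ_star_algebra_def, THEN conjunct2, THEN conjunct2, THEN conjunct2, THEN conjunct2, THEN conjunct2, THEN conjunct2, THEN conjunct2, THEN conjunct2, THEN conjunct2, THEN conjunct2, THEN conjunct2, THEN conjunct2, THEN conjunct2, THEN conjunct2, THEN conjunct2, THEN conjunct2, THEN conjunct2, THEN conjunct1] by blast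
lemma ext: "A \<in> A0 \<Longrightarrow> (\<And>n. An n \<in> A0) \<Longrightarrow> An \<longlonglongrightarrow> X \<Longrightarrow>
        (\<lambda>n. mul (An n) A) \<longlonglongrightarrow> mul X A \<and>
        (\<lambda>n. mul A (An n)) \<longlonglongrightarrow> mul A X \<and>
        (\<lambda>n. star (An n)) \<longlonglongrightarrow> star X"
  using cq[unfolded CQ_star_algebra_def, THEN conjunct2, THEN conjunct2, THEN conjunct2, THEN conjunct2, THEN conjunct2, THEN conjunct2, THEN conjunct2, THEN conjunct2, THEN conjunct2, THEN conjunct2, THEN conjunct2, THEN conjunct2, THEN conjunct2, THEN conjunct2, THEN conjunct2, THEN conjunct2, THEN conjunct2, THEN conjunct2, THEN conjunct2, THEN conjunct2, THEN conjunct2, THEN conjunct2, THEN conjunct2, THEN conjunct2, THEN conjunct2, THEN conjunct2, THEN conjunct2] by blast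

lemma wadd: "A \<in> A0 \<Longrightarrow> B \<in> A0 \<Longrightarrow> \<omega> (A + B) = \<omega> A + \<omega> B" using om unfolding E_states_def by blast
lemma wscl: "A \<in> A0 \<Longrightarrow> \<omega> (cscale iu c A) = c * \<omega> A" using om unfolding E_states_def by blast
lemma wpos: "A \<in> A0 \<Longrightarrow> 0 \<le> \<omega> (mul (star A) A)" using om unfolding E_states_def by blast
lemma wI: "\<omega> I = 1" using om unfolding E_states_def by blast
lemma wbd: "\<exists>\<gamma>>0. \<forall>A\<in>A0. cmod (\<omega> A) \<le> \<gamma> * norm A" using om unfolding E_states_def by blast

lemma cs_i: "cscale iu \<i> x = iu x" by (simp add: cscale_def)
lemma cs_m1: "cscale iu (-1) x = - x" by (simp add: cscale_def)
lemma iuA: "A \<in> A0 \<Longrightarrow> iu A \<in> A0" using scaleA[of A \<i>] by (simp add: cs_i)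
lemma negA: "A \<in> A0 \<Longrightarrow> - A \<in> A0" using scaleA[of A "-1"] by (simp add: cs_m1)
lemma diffA: "A \<in> A0 \<Longrightarrow> B \<in> A0 \<Longrightarrow> A - B \<in> A0"
  using addA[of A "-B"] negA by simp
lemma w_iu: "A \<in> A0 \<Longrightarrow> \<omega> (iu A) = \<i> * \<omega> A" using wscl[of A \<i>] by (simp add: cs_i)
lemma w_neg: "A \<in> A0 \<Longrightarrow> \<omega> (- A) = - \<omega> A" using wscl[of A "-1"] by (simp add: cs_m1)
lemma w_diff: "A \<in> A0 \<Longrightarrow> B \<in> A0 \<Longrightarrow> \<omega> (A - B) = \<omega> A - \<omega> B"
  using wadd[of A "-B"] negA w_neg by simp
lemma mdr: "A \<in> A0 \<Longrightarrow> B \<in> A0 \<Longrightarrow> C \<in> A0 \<Longrightarrow> mul C (A - B) = mul C A - mul C B"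
  using distr[of "A - B" B C] diffA by simp
lemma mdl: "A \<in> A0 \<Longrightarrow> B \<in> A0 \<Longrightarrow> C \<in> A0 \<Longrightarrow> mul (A - B) C = mul A C - mul B C"
  using distl[of "A - B" B C] diffA by simp
lemma miur: "A \<in> A0 \<Longrightarrow> B \<in> A0 \<Longrightarrow> mul A (iu B) = iu (mul A B)"
  using mscr[of A B \<i>] by (simp add: cs_i)
lemma starI: "star I = I"
proof -
  have "star (mul (star I) I) = mul (star I) I" using starmul[of "star I" I] IA starA starstar by simp
  moreover have "mul (star I) I = star I" using unitr starA IA by blast
  ultimately show ?thesis using starstar IA by metis
qed

lemma iu_bl: "bounded_linear iu"
proof (rule bounded_linear_intro[where K=1])
  show "iu (x + y) = iu x + iu y" for x y using lin by (simp add: linear_add)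
  show "iu (r *\<^sub>R x) = r *\<^sub>R iu x" for r x using lin by (simp add: linear_scale)
  show "norm (iu x) \<le> norm x * 1" for x using ncs[of \<i> x] by (simp add: cs_i)
qed

lemma dseq: "\<exists>Xn. (\<forall>n. Xn n \<in> A0) \<and> Xn \<longlonglongrightarrow> X"
  using dense closure_sequential[of X A0] by auto

lemma w_cauchy:
  assumes "\<And>n. An n \<in> A0" "An \<longlonglongrightarrow> X" shows "convergent (\<lambda>n. \<omega> (An n))"
proof -
  obtain g where g: "g > 0" "\<forall>A\<in>A0. cmod (\<omega> A) \<le> g * norm A" using wbd by blast
  have C: "Cauchy An" using assms(2) LIMSEQ_imp_Cauchy by blast
  have "Cauchy (\<lambda>n. \<omega> (An n))"
  proof (rule metric_CauchyI)
    fix e :: real assume e: "e > 0"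
    then obtain M where M: "\<forall>m\<ge>M. \<forall>n\<ge>M. dist (An m) (An n) < e / g"
      using C g(1) unfolding Cauchy_def by (meson divide_pos_pos)
    show "\<exists>M. \<forall>m\<ge>M. \<forall>n\<ge>M. dist (\<omega> (An m)) (\<omega> (An n)) < e"
    proof (intro exI allI impI)
      fix m n assume "m \<ge> M" "n \<ge> M"
      then have d: "norm (An m - An n) < e / g" using M by (simp add: dist_norm)
      have "dist (\<omega> (An m)) (\<omega> (An n)) = cmod (\<omega> (An m - An n))"
        using w_diff assms(1) by (simp add: dist_norm)
      also have "\<dots> \<le> g * norm (An m - An n)" using g(2) diffA assms(1) by blast
      also have "\<dots> < g * (e / g)" using d g(1) by (simp only: mult_strict_left_mono)
      also have "\<dots> = e" using g(1) by simp
      finally show "dist (\<omega> (An m)) (\<omega> (An n)) < e" .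
    qed
  qed
  then show ?thesis using Cauchy_convergent_iff by blast
qed

lemma w_uniq:
  assumes "\<And>n. An n \<in> A0" "An \<longlonglongrightarrow> X" "\<And>n. Bn n \<in> A0" "Bn \<longlonglongrightarrow> X"
    and "(\<lambda>n. \<omega> (An n)) \<longlonglongrightarrow> z" "(\<lambda>n. \<omega> (Bn n)) \<longlonglongrightarrow> z'"
  shows "z = z'"
proof -
  obtain g where g: "g > 0" "\<forall>A\<in>A0. cmod (\<omega> A) \<le> g * norm A" using wbd by blast
  have "(\<lambda>n. An n - Bn n) \<longlonglongrightarrow> 0" using tendsto_diff[OF assms(2,4)] by simp
  then have L: "(\<lambda>n. g * norm (An n - Bn n)) \<longlonglongrightarrow> 0"
    using tendsto_mult_right_zero tendsto_norm_zero by blast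
  have B: "norm (\<omega> (An n) - \<omega> (Bn n)) \<le> g * norm (An n - Bn n)" for n
    using g(2) w_diff[OF assms(1,3)] diffA[OF assms(1,3)] by metis
  have "(\<lambda>n. \<omega> (An n) - \<omega> (Bn n)) \<longlonglongrightarrow> 0"
    by (rule Lim_null_comparison[OF _ L]) (use B in \<open>simp add: always_eventually\<close>)
  moreover have "(\<lambda>n. \<omega> (An n) - \<omega> (Bn n)) \<longlonglongrightarrow> z - z'" using tendsto_diff[OF assms(5,6)] .
  ultimately show ?thesis using LIMSEQ_unique by fastforce
qed

lemma ob_lim:
  assumes "\<And>n. An n \<in> A0" "An \<longlonglongrightarrow> X"
  shows "(\<lambda>n. \<omega> (An n)) \<longlonglongrightarrow> omega_bar A0 \<omega> X"
proof -
  obtain z where z: "(\<lambda>n. \<omega> (An n)) \<longlonglongrightarrow> z" using w_cauchy[OF assms] convergent_def by blast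
  have P: "\<forall>Bn. (\<forall>n. Bn n \<in> A0) \<and> Bn \<longlonglongrightarrow> X \<longrightarrow> (\<lambda>n. \<omega> (Bn n)) \<longlonglongrightarrow> z"
  proof (intro allI impI)
    fix Bn assume B: "(\<forall>n. Bn n \<in> A0) \<and> Bn \<longlonglongrightarrow> X"
    obtain z' where z': "(\<lambda>n. \<omega> (Bn n)) \<longlonglongrightarrow> z'" using w_cauchy[of Bn X] B convergent_def by blast
    have "z = z'" using w_uniq[of An X Bn z z'] assms B z z' by blast
    then show "(\<lambda>n. \<omega> (Bn n)) \<longlonglongrightarrow> z" using z' by simp
  qed
  have "omega_bar A0 \<omega> X = z"
    unfolding omega_bar_def
  proof (rule the_equality)
    show "\<forall>Bn. (\<forall>n. Bn n \<in> A0) \<and> Bn \<longlonglongrightarrow> X \<longrightarrow> (\<lambda>n. \<omega> (Bn n)) \<longlonglongrightarrow> z" by (rule P)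
    fix y assume "\<forall>Bn. (\<forall>n. Bn n \<in> A0) \<and> Bn \<longlonglongrightarrow> X \<longrightarrow> (\<lambda>n. \<omega> (Bn n)) \<longlonglongrightarrow> y"
    then have "(\<lambda>n. \<omega> (An n)) \<longlonglongrightarrow> y" using assms by blast
    then show "y = z" using z LIMSEQ_unique by blast
  qed
  then show ?thesis using z by simp
qed

lemma ob_A0: "A \<in> A0 \<Longrightarrow> omega_bar A0 \<omega> A = \<omega> A"
  using ob_lim[of "\<lambda>n. A" A] LIMSEQ_unique by auto


lemma lim2:
  assumes "A \<in> A0" "\<And>n. An n \<in> A0" "An \<longlonglongrightarrow> X"
  shows "(\<lambda>n. \<omega> (mul (An n) A)) \<longlonglongrightarrow> omega_bar A0 \<omega> (mul X A)"
    and "(\<lambda>n. \<omega> (mul A (An n))) \<longlonglongrightarrow> omega_bar A0 \<omega> (mul A X)"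
  using ob_lim[of "\<lambda>n. mul (An n) A" "mul X A"] ob_lim[of "\<lambda>n. mul A (An n)" "mul A X"]
    ext[OF assms] mulA assms by auto

lemma expand:
  assumes "X \<in> A0" "Y \<in> A0"
  shows "\<omega> (mul (star (X + Y)) (X + Y)) =
    \<omega> (mul (star X) X) + \<omega> (mul (star X) Y) + \<omega> (mul (star Y) X) + \<omega> (mul (star Y) Y)"
proof -
  have "mul (star (X + Y)) (X + Y) = mul (star X + star Y) (X + Y)" using staradd assms by simp
  also have "\<dots> = mul (star X) (X + Y) + mul (star Y) (X + Y)" using distl starA addA assms by simp
  also have "\<dots> = (mul (star X) X + mul (star X) Y) + (mul (star Y) X + mul (star Y) Y)"
    using distr starA assms by simp
  finally have e: "mul (star (X + Y)) (X + Y) = (mul (star X) X + mul (star X) Y) + (mul (star Y) X + mul (star Y) Y)" .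
  show ?thesis unfolding e using wadd mulA addA starA assms by (simp add: add.assoc)
qed

lemma fscl: "X \<in> A0 \<Longrightarrow> Y \<in> A0 \<Longrightarrow>
  \<omega> (mul (star (cscale iu c X)) (cscale iu d Y)) = cnj c * d * \<omega> (mul (star X) Y)"
  using starscl mscl mscr wscl starA mulA scaleA by simp

lemma q_expand:
  assumes "X \<in> A0" "Y \<in> A0"
  shows "\<omega> (mul (star (X + cscale iu c Y)) (X + cscale iu c Y)) =
    \<omega> (mul (star X) X) + c * \<omega> (mul (star X) Y) + cnj c * \<omega> (mul (star Y) X) + cnj c * c * \<omega> (mul (star Y) Y)"
proof -
  have a: "\<omega> (mul (star X) (cscale iu c Y)) = c * \<omega> (mul (star X) Y)"
    using fscl[of X Y 1 c] assms by (simp add: cscale_def)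
  have b: "\<omega> (mul (star (cscale iu c Y)) X) = cnj c * \<omega> (mul (star Y) X)"
    using fscl[of Y X c 1] assms by (simp add: cscale_def)
  show ?thesis using expand[of X "cscale iu c Y"] assms scaleA a b fscl[of Y Y c c] by simp
qed

lemma herm: assumes "A \<in> A0" shows "\<omega> (star A) = cnj (\<omega> A)"
proof -
  have q: "0 \<le> 1 + c * \<omega> A + cnj c * \<omega> (star A) + cnj c * c * \<omega> (mul (star A) A)" for c
    using q_expand[of I A c] wpos[of "I + cscale iu c A"] addA scaleA IA assms
      starI unitl unitr starA wI by simp
  have p: "0 \<le> \<omega> (mul (star A) A)" using wpos assms by simp
  have 1: "Im (\<omega> A) + Im (\<omega> (star A)) = 0" using q[of 1] p by (simp add: less_eq_complex_def)
  have 2: "Re (\<omega> A) - Re (\<omega> (star A)) = 0" using q[of \<i>] p by (simp add: less_eq_complex_def)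
  show ?thesis using 1 2 by (simp add: complex_eq_iff)
qed

lemma csI: assumes "A \<in> A0" shows "(cmod (\<omega> A))\<^sup>2 \<le> Re (\<omega> (mul (star A) A))"
proof -
  define z where "z = \<omega> A"
  have "0 \<le> \<omega> (mul (star A) A) + (- z) * \<omega> (star A) + cnj (- z) * \<omega> A + cnj (- z) * (- z) * 1"
    using q_expand[of A I "- z"] wpos[of "A + cscale iu (- z) I"] addA scaleA IA assms
      starI unitl unitr starA wI by simp
  then have "0 \<le> \<omega> (mul (star A) A) - cnj z * z"
    using herm[OF assms] unfolding z_def by (simp add: algebra_simps)
  then have "0 \<le> Re (\<omega> (mul (star A) A)) - Re (cnj z * z)" by (simp add: less_eq_complex_def)
  moreover have "Re (cnj z * z) = (cmod z)\<^sup>2" by (simp add: cmod_power2) (simp add: power2_eq_square)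
  ultimately show ?thesis unfolding z_def by simp
qed

end

theorem theorem5p8:
  fixes A0 :: "'a::banach set" and norm0 :: "'a \<Rightarrow> real" and iu :: "'a \<Rightarrow> 'a"
    and mul :: "'a \<Rightarrow> 'a \<Rightarrow> 'a" and star :: "'a \<Rightarrow> 'a" and I H :: 'a
    and \<omega> :: "'a \<Rightarrow> complex" and \<alpha> :: complex
  assumes "CQ_star_algebra A0 norm0 iu mul star I"
    and "star H = H"
    and "\<omega> \<in> E_states A0 iu mul star I"
    and "ground_state A0 \<omega> mul star H \<alpha>"
  shows "(\<forall>A\<in>A0. - \<i> * omega_bar A0 \<omega> (mul (star A) (delta_H iu mul H A))\<ge> 0) \<and>
         (\<forall>A\<in>A0. omega_bar A0 \<omega> (delta_H iu mul H A) = 0) \<and>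
         (\<alpha> \<in> Spec_pi A0 \<omega> mul star H \<and> (\<forall>\<beta>\<in>Spec_pi A0 \<omega> mul star H. \<alpha> \<le> \<beta>))"
proof -
  interpret cqa A0 norm0 iu mul star I \<omega> using assms(1,3) by unfold_locales
  have gsa: "\<And>A. A \<in> A0 \<Longrightarrow> omega_bar A0 \<omega> (mul A H) = \<alpha> * omega_bar A0 \<omega> A"
    using assms(4) unfolding ground_state_def by blast
  have gsb: "\<And>B. B \<in> A0 \<Longrightarrow> \<alpha> * gns_ip \<omega> mul star B B \<le> pi_form A0 \<omega> mul star H B B"
    using assms(4) unfolding ground_state_def by blast
  obtain Hn where Hn: "\<And>n. Hn n \<in> A0" "Hn \<longlonglongrightarrow> H" using dseq[of H] by blast
  have IH: "mul I H = H"
  proof -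
    have "(\<lambda>n. mul I (Hn n)) \<longlonglongrightarrow> mul I H" using ext[OF IA Hn] by blast
    moreover have "(\<lambda>n. mul I (Hn n)) = Hn" using unitl Hn(1) by auto
    ultimately show ?thesis using Hn(2) LIMSEQ_unique by metis
  qed
  have HI: "mul H I = H"
  proof -
    have "(\<lambda>n. mul (Hn n) I) \<longlonglongrightarrow> mul H I" using ext[OF IA Hn] by blast
    moreover have "(\<lambda>n. mul (Hn n) I) = Hn" using unitr Hn(1) by auto
    ultimately show ?thesis using Hn(2) LIMSEQ_unique by metis
  qed
  have sHn: "(\<lambda>n. star (Hn n)) \<longlonglongrightarrow> H" using ext[OF IA Hn] assms(2) by simp
  have sHnA: "\<And>n. star (Hn n) \<in> A0" using starA Hn(1) by blast
  have obH: "omega_bar A0 \<omega> H = \<alpha>" using gsa[OF IA] IH ob_A0[OF IA] wI by simp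
  have areal: "cnj \<alpha> = \<alpha>"
  proof -
    have a: "(\<lambda>n. \<omega> (Hn n)) \<longlonglongrightarrow> \<alpha>" using ob_lim[OF Hn] obH by simp
    have "(\<lambda>n. \<omega> (star (Hn n))) \<longlonglongrightarrow> \<alpha>" using ob_lim[OF sHnA sHn] obH by simp
    moreover have "(\<lambda>n. \<omega> (star (Hn n))) = (\<lambda>n. cnj (\<omega> (Hn n)))" using herm Hn(1) by auto
    ultimately have "(\<lambda>n. cnj (\<omega> (Hn n))) \<longlonglongrightarrow> \<alpha>" by simp
    moreover have "(\<lambda>n. cnj (\<omega> (Hn n))) \<longlonglongrightarrow> cnj \<alpha>" using tendsto_cnj[OF a] .
    ultimately show ?thesis using LIMSEQ_unique by metis
  qed
  have inner: "(\<lambda>n. iu (mul (Hn n) A - mul A (Hn n))) \<longlonglongrightarrow> delta_H iu mul H A"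
    if A: "A \<in> A0" for A
  proof -
    have d: "(\<lambda>n. mul (Hn n) A - mul A (Hn n)) \<longlonglongrightarrow> mul H A - mul A H"
      using ext[OF A Hn] by (intro tendsto_diff) auto
    show ?thesis unfolding delta_H_def by (rule bounded_linear.tendsto[OF iu_bl d])
  qed
  have innerA: "\<And>n. iu (mul (Hn n) A - mul A (Hn n)) \<in> A0" if A: "A \<in> A0" for A
    using iuA[OF diffA[OF mulA[OF Hn(1) A] mulA[OF A Hn(1)]]] .
  have P1: "- \<i> * omega_bar A0 \<omega> (mul (star A) (delta_H iu mul H A)) \<ge> 0" if A: "A \<in> A0" for A
  proof -
    define S where "S n = mul (star A) (iu (mul (Hn n) A - mul A (Hn n)))" for n
    have SA: "S n \<in> A0" for n unfolding S_def using mulA[OF starA[OF A] innerA[OF A]] .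
    have "S \<longlonglongrightarrow> mul (star A) (delta_H iu mul H A)"
      unfolding S_def using ext[OF starA[OF A] innerA[OF A] inner[OF A]] by blast
    then have L1: "(\<lambda>n. \<omega> (S n)) \<longlonglongrightarrow> omega_bar A0 \<omega> (mul (star A) (delta_H iu mul H A))"
      using ob_lim[of S, OF SA] by blast
    have eq: "\<omega> (S n) = \<i> * (\<omega> (mul (star A) (mul (Hn n) A)) - \<omega> (mul (mul (star A) A) (Hn n)))" for n
    proof -
      have "S n = iu (mul (star A) (mul (Hn n) A) - mul (mul (star A) A) (Hn n))"
        unfolding S_def using miur mdr assoc starA A Hn(1) mulA diffA by simp
      then show ?thesis using w_iu w_diff mulA starA A Hn(1) diffA by simp
    qed
    have t1: "(\<lambda>n. \<omega> (mul (star A) (mul (Hn n) A))) \<longlonglongrightarrow> omega_bar A0 \<omega> (mul (star A) (mul H A))"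
    proof -
      have "(\<lambda>n. mul (Hn n) A) \<longlonglongrightarrow> mul H A" using ext[OF A Hn] by blast
      then show ?thesis using lim2(2)[of "star A" "\<lambda>n. mul (Hn n) A", OF starA[OF A] mulA[OF Hn(1) A]] by blast
    qed
    have t2: "(\<lambda>n. \<omega> (mul (mul (star A) A) (Hn n))) \<longlonglongrightarrow> \<alpha> * \<omega> (mul (star A) A)"
      using lim2(2)[OF mulA[OF starA[OF A] A] Hn] gsa[OF mulA[OF starA[OF A] A]]
        ob_A0[OF mulA[OF starA[OF A] A]] by simp
    have "(\<lambda>n. \<omega> (S n)) \<longlonglongrightarrow> \<i> * (omega_bar A0 \<omega> (mul (star A) (mul H A)) - \<alpha> * \<omega> (mul (star A) A))"
      unfolding eq by (intro tendsto_intros t1 t2)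
    then have v: "omega_bar A0 \<omega> (mul (star A) (delta_H iu mul H A)) =
       \<i> * (pi_form A0 \<omega> mul star H A A - \<alpha> * gns_ip \<omega> mul star A A)"
      using L1 LIMSEQ_unique unfolding pi_form_def gns_ip_def by blast
    have "\<alpha> * gns_ip \<omega> mul star A A \<le> pi_form A0 \<omega> mul star H A A" using gsb[OF A] .
    then show ?thesis unfolding v by (simp add: less_eq_complex_def)
  qed
  have P2: "omega_bar A0 \<omega> (delta_H iu mul H A) = 0" if A: "A \<in> A0" for A
  proof -
    have L1: "(\<lambda>n. \<omega> (iu (mul (Hn n) A - mul A (Hn n)))) \<longlonglongrightarrow> omega_bar A0 \<omega> (delta_H iu mul H A)"
      using ob_lim[OF innerA[OF A] inner[OF A]] .
    have eq: "\<omega> (iu (mul (Hn n) A - mul A (Hn n))) = \<i> * (cnj (\<omega> (mul (star A) (star (Hn n)))) - \<omega> (mul A (Hn n)))" for n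
    proof -
      have "\<omega> (mul (Hn n) A) = cnj (\<omega> (mul (star A) (star (Hn n))))"
        using herm[OF mulA[OF Hn(1) A]] starmul[OF Hn(1) A] by simp
      then show ?thesis using w_iu w_diff mulA A Hn(1) diffA by simp
    qed
    have t1: "(\<lambda>n. \<omega> (mul (star A) (star (Hn n)))) \<longlonglongrightarrow> \<alpha> * \<omega> (star A)"
      using lim2(2)[OF starA[OF A] sHnA sHn] gsa[OF starA[OF A]] ob_A0[OF starA[OF A]] by simp
    have t2: "(\<lambda>n. \<omega> (mul A (Hn n))) \<longlonglongrightarrow> \<alpha> * \<omega> A"
      using lim2(2)[OF A Hn] gsa[OF A] ob_A0[OF A] by simp
    have "(\<lambda>n. \<omega> (iu (mul (Hn n) A - mul A (Hn n)))) \<longlonglongrightarrow> \<i> * (cnj (\<alpha> * \<omega> (star A)) - \<alpha> * \<omega> A)"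
      unfolding eq by (intro tendsto_intros t1 t2)
    moreover have "cnj (\<alpha> * \<omega> (star A)) = \<alpha> * \<omega> A" using herm[OF A] areal by simp
    ultimately show ?thesis using L1 LIMSEQ_unique by fastforce
  qed
  have P3: "\<alpha> \<in> Spec_pi A0 \<omega> mul star H"
    unfolding Spec_pi_def
  proof (intro CollectI bexI[of _ I] conjI ballI)
    show "I \<in> A0" by (rule IA)
    show "gns_ip \<omega> mul star I I \<noteq> 0" unfolding gns_ip_def using starI unitl IA wI by simp
    have pf: "pi_form A0 \<omega> mul star H I C = \<alpha> * \<omega> (star C)" if C: "C \<in> A0" for C
      unfolding pi_form_def using HI gsa[OF starA[OF C]] ob_A0[OF starA[OF C]] by simp
    show "pi_form A0 \<omega> mul star H I C = \<alpha> * gns_ip \<omega> mul star I C" if C: "C \<in> A0" for C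
      unfolding gns_ip_def using pf[OF C] unitr starA C by simp
    show "pi_bounded A0 \<omega> mul star H I"
      unfolding pi_bounded_def
    proof (intro exI ballI)
      fix C assume C: "C \<in> A0"
      have "cmod (\<omega> C) \<le> sqrt (Re (\<omega> (mul (star C) C)))"
        using csI[OF C] real_le_rsqrt by blast
      then have "cmod \<alpha> * cmod (\<omega> C) \<le> cmod \<alpha> * sqrt (Re (\<omega> (mul (star C) C)))"
        by (simp add: mult_left_mono)
      then show "cmod (pi_form A0 \<omega> mul star H I C) \<le> cmod \<alpha> * sqrt (Re (gns_ip \<omega> mul star C C))"
        unfolding gns_ip_def using pf[OF C] herm[OF C] by (simp add: norm_mult)
    qed
  qed
  have P4: "\<alpha> \<le> \<beta>" if b: "\<beta> \<in> Spec_pi A0 \<omega> mul star H" for \<beta>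
  proof -
    obtain B where B: "B \<in> A0" "gns_ip \<omega> mul star B B \<noteq> 0"
      "\<forall>C\<in>A0. pi_form A0 \<omega> mul star H B C = \<beta> * gns_ip \<omega> mul star B C"
      using b unfolding Spec_pi_def by blast
    define r where "r = gns_ip \<omega> mul star B B"
    have r0: "0 \<le> r" unfolding r_def gns_ip_def using wpos B(1) by blast
    have r1: "r \<noteq> 0" using B(2) r_def by simp
    have rr: "Im r = 0" "Re r > 0" using r0 r1 by (auto simp: less_eq_complex_def complex_eq_iff)
    have "\<alpha> * r \<le> \<beta> * r" using gsb[OF B(1)] B(3) B(1) unfolding r_def by simp
    then show ?thesis using rr by (simp add: less_eq_complex_def)
  qed
  show ?thesis by (intro conjI ballI P1 P2 P3 P4)
qed

end
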